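(* Let $\mathbf{Q}$, $\mathbf{A}$, $\mathbf{I}$ be a closed rectangle, a closed annulus and a closed interval in $\mathbb{C}$, with interiors $Q$, $A$ and $I$ ($I$ being $\mathbf{I}$ minus its endpoints). Then $\mathrm{Poly}_d^{mt}(\mathbf{Q})$, $\mathrm{Poly}_d^{mt}(\mathbf{A})$ and $\mathrm{Poly}_d^{mt}(\mathbf{I})$ are compactifications of $\mathrm{Poly}_d^{mt}(Q)$, $\mathrm{Poly}_d^{mt}(A)$ and $\mathrm{Poly}_d^{mt}(I)$, respectively.
   Context: $d\ge2$. $\mathrm{Poly}_d^{mt}$ is the space of monic degree-$d$ complex polynomials modulo precomposition with translations, topologized via coefficients of the centered representative; $\mathrm{Poly}_d^{mt}(X)$ is the subspace of classes whose critical values (values of $p$ at roots of $p'$) all lie in $X\subseteq\mathbb{C}$. A compactification of a space $Y$ is a compact space containing $Y$ as a dense subspace. *)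

theory Defs
  imports "HOL-Analysis.Analysis" "HOL-Computational_Algebra.Polynomial"
begin

text \<open>Centered representative of a class in Poly_d^mt: monic, degree d, vanishing
  coefficient of z^(d-1) (each class mod translation has exactly one such representative).\<close>
definition centered_monic :: "nat \<Rightarrow> complex poly \<Rightarrow> bool" where
  "centered_monic d p \<longleftrightarrow> degree p = d \<and> lead_coeff p = 1 \<and> coeff p (d - 1) = 0"

definition critical_values :: "complex poly \<Rightarrow> complex set" where
  "critical_values p = {poly p z | z. poly (pderiv p) z = 0}"

text \<open>Poly_d^mt(X), embedded via coefficients of the centered representative into
  nat => complex (product topology).\<close>
definition Poly_mt :: "nat \<Rightarrow> complex set \<Rightarrow> (nat \<Rightarrow> complex) set" where
  "Poly_mt d X = {(\<lambda>i. coeff p i) | p. centered_monic d p \<and> critical_values p \<subseteq> X}"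

definition is_compactification_of :: "'a::topological_space set \<Rightarrow> 'a set \<Rightarrow> bool" where
  "is_compactification_of K Y \<longleftrightarrow> compact K \<and> Y \<subseteq> K \<and> K \<subseteq> closure Y"

definition closed_rectangle :: "complex set \<Rightarrow> bool" where
  "closed_rectangle S \<longleftrightarrow> (\<exists>w u a b. norm u = 1 \<and> a > 0 \<and> b > 0 \<and>
     S = {w + u * (complex_of_real x + \<i> * complex_of_real y) | x y. 0 \<le> x \<and> x \<le> a \<and> 0 \<le> y \<and> y \<le> b})"

definition closed_annulus :: "complex set \<Rightarrow> bool" where
  "closed_annulus S \<longleftrightarrow> (\<exists>z0 r R. 0 < r \<and> r < R \<and> S = cball z0 R - ball z0 r)"

end

theory Submission
  imports Defs "HOL-Computational_Algebra.Fundamental_Theorem_Algebra"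
begin


lemma poly_prod_lin: "poly (\<Prod>x\<leftarrow>xs. [:-x, 1:]) z = (\<Prod>x\<leftarrow>xs. z - x)"
  for z :: complex by (induction xs) (auto simp: algebra_simps)

lemma norm_prod_list_c: "cmod (\<Prod>x\<leftarrow>xs. f x) = (\<Prod>x\<leftarrow>xs. cmod (f x))"
  for f :: "'a \<Rightarrow> complex" by (induction xs) (auto simp: norm_mult)

lemma poly_factor_list:
  fixes P :: "complex poly"
  assumes "P \<noteq> 0"
  obtains xs where "length xs = degree P" "set xs = {z. poly P z = 0}"
    "P = smult (lead_coeff P) (\<Prod>x\<leftarrow>xs. [:-x, 1:])" "mset xs = proots P"
proof -
  obtain xs where xs: "mset xs = proots P" using ex_mset by blast
  have "P = smult (lead_coeff P) (\<Prod>x\<in>#proots P. [:-x, 1:])"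
    by (rule complex_poly_decompose_multiset [symmetric])
  also have "(\<Prod>x\<in>#proots P. [:-x, 1:]) = (\<Prod>x\<leftarrow>xs. [:-x, 1:])"
    by (subst prod_mset_prod_list [symmetric]) (simp add: xs)
  finally have e: "P = smult (lead_coeff P) (\<Prod>x\<leftarrow>xs. [:-x, 1:])" .
  have "length xs = degree P" using xs size_proots_complex[of P] by (metis size_mset)
  moreover have "set xs = {z. poly P z = 0}" using xs assms
    by (metis set_count_proots set_mset_mset)
  ultimately show ?thesis using e that xs by blast
qed

lemma nearest_list:
  fixes z :: complex
  assumes "xs \<noteq> []"
  shows "\<exists>c\<in>set xs. cmod (z - c) ^ length xs \<le> (\<Prod>x\<leftarrow>xs. cmod (z - x))"
  using assms
proof (induction xs)
  case Nil then show ?case by simp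
next
  case (Cons a xs)
  show ?case
  proof (cases "xs = []")
    case True then show ?thesis by simp
  next
    case False
    then obtain c where c: "c \<in> set xs" "cmod (z - c) ^ length xs \<le> (\<Prod>x\<leftarrow>xs. cmod (z - x))"
      using Cons by blast
    show ?thesis
    proof (cases "cmod (z - a) \<le> cmod (z - c)")
      case True
      have "cmod (z - a) ^ length xs \<le> cmod (z - c) ^ length xs"
        using True by (simp add: power_mono)
      then have "cmod (z - a) * cmod (z - a) ^ length xs \<le> cmod (z - a) * (\<Prod>x\<leftarrow>xs. cmod (z - x))"
        using c by (meson mult_left_mono norm_ge_zero order_trans)
      then show ?thesis by auto
    next
      case False
      have "cmod (z - c) * cmod (z - c) ^ length xs \<le> cmod (z - a) * (\<Prod>x\<leftarrow>xs. cmod (z - x))"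
        using c False by (meson less_le_not_le mult_mono nle_le norm_ge_zero prod_list_nonneg zero_le_power)
      then show ?thesis using c by auto
    qed
  qed
qed

lemma root_near:
  fixes P :: "complex poly"
  assumes "degree P \<ge> 1"
  shows "\<exists>c. poly P c = 0 \<and> cmod (lead_coeff P) * cmod (z - c) ^ degree P \<le> cmod (poly P z)"
proof -
  have "P \<noteq> 0" using assms by auto
  then obtain xs where xs: "length xs = degree P" "set xs = {z. poly P z = 0}"
    "P = smult (lead_coeff P) (\<Prod>x\<leftarrow>xs. [:-x, 1:])" by (rule poly_factor_list)
  have "xs \<noteq> []" using xs assms by auto
  then obtain c where c: "c \<in> set xs" "cmod (z - c) ^ length xs \<le> (\<Prod>x\<leftarrow>xs. cmod (z - x))"
    using nearest_list by blast
  have "cmod (poly P z) = cmod (lead_coeff P) * (\<Prod>x\<leftarrow>xs. cmod (z - x))"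
    by (subst xs(3)) (simp add: poly_prod_lin norm_mult norm_prod_list_c)
  then show ?thesis using c xs by (metis mem_Collect_eq mult_left_mono norm_ge_zero)
qed



lemma poly_sum_N: "degree p \<le> N \<Longrightarrow> poly p z = (\<Sum>i\<le>N. coeff p i * z^i)"
  for p :: "complex poly"
proof -
  assume a: "degree p \<le> N"
  have "(\<Sum>i\<le>N. coeff p i * z^i) = (\<Sum>i\<le>degree p. coeff p i * z^i)"
    using a by (intro sum.mono_neutral_right) (auto simp: coeff_eq_0)
  then show ?thesis using poly_altdef[of p z] by simp
qed

lemma poly_tendsto:
  fixes p :: "'b \<Rightarrow> complex poly"
  assumes "\<And>i. ((\<lambda>n. coeff (p n) i) \<longlongrightarrow> coeff q i) F" "\<And>n. degree (p n) \<le> N" "degree q \<le> N"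
    "(z \<longlongrightarrow> z0) F"
  shows "((\<lambda>n. poly (p n) (z n)) \<longlongrightarrow> poly q z0) F"
  by (simp add: poly_sum_N[OF assms(2)] poly_sum_N[OF assms(3)]) (intro tendsto_intros assms)

lemma coeff_pderiv_tendsto:
  fixes p :: "'b \<Rightarrow> complex poly"
  assumes "\<And>i. ((\<lambda>n. coeff (p n) i) \<longlongrightarrow> coeff q i) F"
  shows "((\<lambda>n. coeff (pderiv (p n)) i) \<longlongrightarrow> coeff (pderiv q) i) F"
  by (simp add: coeff_pderiv) (intro tendsto_intros assms)

lemma cm_intro:
  assumes "coeff q d = 1" "\<And>i. i > d \<Longrightarrow> coeff q i = 0" "coeff q (d-1) = 0"
  shows "centered_monic d q"
proof -
  have "degree q \<le> d" using assms(2) by (simp add: degree_le)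
  moreover have "d \<le> degree q" using assms(1) by (simp add: le_degree)
  ultimately show ?thesis using assms unfolding centered_monic_def by auto
qed

lemma cm_degree: "centered_monic d p \<Longrightarrow> degree p = d"
  and cm_lead: "centered_monic d p \<Longrightarrow> coeff p d = 1"
  and cm_cent: "centered_monic d p \<Longrightarrow> coeff p (d-1) = 0"
  by (auto simp: centered_monic_def)

lemma cm_pderiv_degree: "centered_monic d p \<Longrightarrow> degree (pderiv p) = d - 1"
  by (simp add: cm_degree degree_pderiv)

lemma cm_pderiv_lead: "centered_monic d p \<Longrightarrow> d \<ge> 1 \<Longrightarrow> coeff (pderiv p) (d - 1) = of_nat d"
proof -
  assume a: "centered_monic d p" "d \<ge> 1"
  then obtain k where k: "d = Suc k" by (cases d) auto
  show ?thesis using cm_lead[OF a(1)] unfolding k by (simp add: coeff_pderiv)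
qed

lemma cm_pderiv_lead': "centered_monic d p \<Longrightarrow> d \<ge> 1 \<Longrightarrow> lead_coeff (pderiv p) = of_nat d"
  by (metis cm_pderiv_degree cm_pderiv_lead)

lemma poly_bound:
  fixes P :: "complex poly"
  assumes "cmod z \<le> Z"
  shows "cmod (poly P z) \<le> (\<Sum>i\<le>degree P. cmod (coeff P i) * Z^i)"
proof -
  have "cmod (poly P z) \<le> (\<Sum>i\<le>degree P. cmod (coeff P i * z^i))"
    unfolding poly_altdef by (rule norm_sum)
  also have "\<dots> \<le> (\<Sum>i\<le>degree P. cmod (coeff P i) * Z^i)"
    by (intro sum_mono) (simp add: norm_mult norm_power assms mult_left_mono power_mono)
  finally show ?thesis .
qed

lemma cauchy_bound:
  fixes P :: "complex poly"
  assumes "degree P \<ge> 1" "poly P z = 0"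
  shows "cmod z \<le> max 1 ((\<Sum>i<degree P. cmod (coeff P i)) / cmod (lead_coeff P))"
proof (rule ccontr)
  define n where "n = degree P"
  define A where "A = (\<Sum>i<n. cmod (coeff P i))"
  define l where "l = lead_coeff P"
  assume "\<not> ?thesis"
  then have z1: "cmod z > 1" and zA: "cmod z > A / cmod l" by (auto simp: A_def n_def l_def)
  have l0: "l \<noteq> 0" using assms(1) by (auto simp: l_def)
  have "poly P z = (\<Sum>i<n. coeff P i * z^i) + l * z^n"
    unfolding poly_altdef n_def l_def by (simp add: lessThan_Suc_atMost[symmetric])
  then have "l * z^n = - (\<Sum>i<n. coeff P i * z^i)" using assms(2) by (simp add: eq_neg_iff_add_eq_0 add.commute)
  then have "cmod l * cmod z ^ n = cmod (\<Sum>i<n. coeff P i * z^i)" by (metis norm_minus_cancel norm_mult norm_power)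
  also have "\<dots> \<le> (\<Sum>i<n. cmod (coeff P i) * cmod z ^ (n - 1))"
  proof -
    have "cmod (\<Sum>i<n. coeff P i * z^i) \<le> (\<Sum>i<n. cmod (coeff P i * z^i))" by (rule norm_sum)
    also have "\<dots> \<le> (\<Sum>i<n. cmod (coeff P i) * cmod z ^ (n - 1))"
      using z1 by (intro sum_mono) (auto simp: norm_mult norm_power intro!: mult_left_mono power_increasing)
    finally show ?thesis .
  qed
  also have "\<dots> = A * cmod z ^ (n - 1)" by (simp add: A_def sum_distrib_right)
  finally have "cmod l * cmod z ^ n \<le> A * cmod z ^ (n - 1)" .
  moreover have "cmod z ^ n = cmod z * cmod z ^ (n - 1)" using assms(1) n_def
    by (metis One_nat_def Suc_pred less_eq_Suc_le power_Suc)
  ultimately have "cmod l * cmod z * cmod z ^ (n - 1) \<le> A * cmod z ^ (n - 1)" by (simp add: mult.assoc)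
  moreover have "cmod z ^ (n - 1) > 0" using z1 by (intro zero_less_power) linarith
  ultimately have "cmod l * cmod z \<le> A" by (simp add: mult_le_cancel_right)
  then have "cmod z \<le> A / cmod l" using l0 by (simp add: field_simps)
  then show False using zA by simp
qed



lemma crit_approx:
  fixes p :: "nat \<Rightarrow> complex poly"
  assumes d: "d \<ge> 2" and cmp: "\<And>n. centered_monic d (p n)" and cmq: "centered_monic d q"
    and lim: "\<And>i. (\<lambda>n. coeff (p n) i) \<longlonglongrightarrow> coeff q i"
    and y: "poly (pderiv q) y = 0"
  shows "\<exists>c. (\<forall>n. poly (pderiv (p n)) (c n) = 0) \<and> c \<longlonglongrightarrow> y \<and> (\<lambda>n. poly (p n) (c n)) \<longlonglongrightarrow> poly q y"
proof -
  have "\<forall>n. \<exists>c. poly (pderiv (p n)) c = 0 \<and> of_nat d * cmod (y - c) ^ (d - 1) \<le> cmod (poly (pderiv (p n)) y)"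
  proof
    fix n
    have "degree (pderiv (p n)) \<ge> 1" using cm_pderiv_degree[OF cmp] d by simp
    from root_near[OF this, of y] show "\<exists>c. poly (pderiv (p n)) c = 0 \<and> of_nat d * cmod (y - c) ^ (d - 1) \<le> cmod (poly (pderiv (p n)) y)"
      using cm_pderiv_lead'[OF cmp] cm_pderiv_degree[OF cmp] d by auto
  qed
  then obtain c where c: "\<And>n. poly (pderiv (p n)) (c n) = 0"
    "\<And>n. of_nat d * cmod (y - c n) ^ (d - 1) \<le> cmod (poly (pderiv (p n)) y)" by metis
  have degp: "\<And>n. degree (pderiv (p n)) \<le> d" using cm_pderiv_degree[OF cmp] by simp
  have degq: "degree (pderiv q) \<le> d" using cm_pderiv_degree[OF cmq] by simp
  have g: "(\<lambda>n. poly (pderiv (p n)) y) \<longlonglongrightarrow> 0"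
    using poly_tendsto[OF coeff_pderiv_tendsto[OF lim] degp degq tendsto_const[of y]] y by simp
  have cy: "c \<longlonglongrightarrow> y"
  proof (rule LIMSEQ_I)
    fix r :: real assume r: "r > 0"
    have "of_nat d * r ^ (d - 1) > 0" using r d by simp
    with g obtain N where N: "\<And>n. n \<ge> N \<Longrightarrow> norm (poly (pderiv (p n)) y) < of_nat d * r ^ (d - 1)"
      by (metis LIMSEQ_D diff_zero)
    show "\<exists>N. \<forall>n\<ge>N. norm (c n - y) < r"
    proof (intro exI allI impI)
      fix n assume "n \<ge> N"
      then have "of_nat d * cmod (y - c n) ^ (d - 1) < of_nat d * r ^ (d - 1)"
        using N c(2)[of n] by fastforce
      then have "cmod (y - c n) ^ (d - 1) < r ^ (d - 1)" using d by simp
      then have "cmod (y - c n) < r" using r by (meson less_imp_le power_less_imp_less_base)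
      then show "norm (c n - y) < r" by (simp add: norm_minus_commute)
    qed
  qed
  have "(\<lambda>n. poly (p n) (c n)) \<longlonglongrightarrow> poly q y"
    by (rule poly_tendsto[OF lim _ _ cy]) (use cm_degree[OF cmp] cm_degree[OF cmq] in auto)
  then show ?thesis using c cy by blast
qed

lemma coord_tendsto:
  fixes f :: "'b \<Rightarrow> nat \<Rightarrow> 'c::topological_space"
  assumes "(f \<longlongrightarrow> l) F"
  shows "((\<lambda>n. f n i) \<longlongrightarrow> l i) F"
  using continuous_on_tendsto_compose[OF continuous_on_product_coordinates assms] by simp

lemma limit_poly:
  fixes p :: "nat \<Rightarrow> complex poly"
  assumes cmp: "\<And>n. centered_monic d (p n)" and lim: "(\<lambda>n i. coeff (p n) i) \<longlonglongrightarrow> l"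
  shows "\<exists>q. centered_monic d q \<and> l = (\<lambda>i. coeff q i) \<and> (\<forall>i. (\<lambda>n. coeff (p n) i) \<longlonglongrightarrow> coeff q i)"
proof -
  have li: "(\<lambda>n. coeff (p n) i) \<longlonglongrightarrow> l i" for i using coord_tendsto[OF lim] by simp
  have l0: "l i = 0" if "i > d" for i
  proof -
    have "(\<lambda>n. coeff (p n) i) = (\<lambda>n. 0)" using cm_degree[OF cmp] that by (auto simp: coeff_eq_0)
    then show ?thesis using li[of i] by (metis LIMSEQ_unique tendsto_const)
  qed
  have l1: "l d = 1"
  proof -
    have "(\<lambda>n. coeff (p n) d) = (\<lambda>n. 1)" using cm_lead[OF cmp] by auto
    then show ?thesis using li[of d] by (metis LIMSEQ_unique tendsto_const)
  qed
  have l2: "l (d - 1) = 0"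
  proof -
    have "(\<lambda>n. coeff (p n) (d - 1)) = (\<lambda>n. 0)" using cm_cent[OF cmp] by auto
    then show ?thesis using li[of "d - 1"] by (metis LIMSEQ_unique tendsto_const)
  qed
  define q where "q = Poly (map l [0..<Suc d])"
  have cq: "coeff q = l"
  proof
    fix i show "coeff q i = l i" using l0[of i] by (auto simp: q_def nth_default_def simp del: upt_Suc)
  qed
  have "centered_monic d q" by (rule cm_intro) (use cq l0 l1 l2 in auto)
  then show ?thesis using cq li by (metis)
qed

lemma compact_box: "compact {f::nat \<Rightarrow> complex. \<forall>i. cmod (f i) \<le> B}"
proof -
  have e: "{f::nat \<Rightarrow> complex. \<forall>i. cmod (f i) \<le> B} = PiE UNIV (\<lambda>_. cball 0 B)"
    by (auto simp: PiE_def Pi_def)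
  have "compactin (product_topology (\<lambda>_. euclidean) UNIV) (PiE UNIV (\<lambda>_::nat. cball (0::complex) B))"
    by (subst compactin_PiE) auto
  then show ?thesis unfolding e euclidean_product_topology by simp
qed

lemma closed_Poly_mt:
  assumes d: "d \<ge> 2" and K: "closed K"
  shows "closed (Poly_mt d K)"
  unfolding closed_sequential_limits
proof (intro allI impI)
  fix x l assume a: "(\<forall>n. x n \<in> Poly_mt d K) \<and> x \<longlonglongrightarrow> l"
  then have "\<forall>n. \<exists>p. x n = (\<lambda>i. coeff p i) \<and> centered_monic d p \<and> critical_values p \<subseteq> K"
    by (auto simp: Poly_mt_def)
  then obtain p where p: "\<And>n. x n = (\<lambda>i. coeff (p n) i)" "\<And>n. centered_monic d (p n)"
    "\<And>n. critical_values (p n) \<subseteq> K" by metis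
  have "(\<lambda>n i. coeff (p n) i) \<longlonglongrightarrow> l" proof -
    have "x = (\<lambda>n i. coeff (p n) i)" using p(1) by auto
    then show ?thesis using a by simp
  qed
  then obtain q where q: "centered_monic d q" "l = (\<lambda>i. coeff q i)" "\<And>i. (\<lambda>n. coeff (p n) i) \<longlonglongrightarrow> coeff q i"
    using limit_poly[of d p l] p(2) by blast
  have "critical_values q \<subseteq> K"
  proof
    fix v assume "v \<in> critical_values q"
    then obtain y where y: "v = poly q y" "poly (pderiv q) y = 0" by (auto simp: critical_values_def)
    obtain c where c: "\<And>n. poly (pderiv (p n)) (c n) = 0" "(\<lambda>n. poly (p n) (c n)) \<longlonglongrightarrow> poly q y"
      using crit_approx[OF d p(2) q(1) q(3) y(2)] by blast
    have "\<And>n. poly (p n) (c n) \<in> K" using p(3) c(1) by (auto simp: critical_values_def)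
    then show "v \<in> K" using closed_sequentially[OF K _ c(2)] y(1) by blast
  qed
  then show "l \<in> Poly_mt d K" using q by (auto simp: Poly_mt_def)
qed



lemma coeff_mult_lin: "coeff ([:-a, 1:] * Q) i = - a * coeff Q i + (case i of 0 \<Rightarrow> 0 | Suc j \<Rightarrow> coeff Q j)"
  for a :: complex
  by (simp add: mult_pCons_left coeff_pCons split: nat.splits)

lemma prod_lin_coeff_bound:
  fixes xs :: "complex list"
  assumes "\<forall>x\<in>set xs. cmod x \<le> \<rho>" "\<rho> \<ge> 0"
  shows "cmod (coeff (\<Prod>x\<leftarrow>xs. [:-x, 1:]) i) \<le> (1 + \<rho>) ^ length xs"
  using assms(1)
proof (induction xs arbitrary: i)
  case Nil then show ?case by (cases i) auto
next
  case (Cons a xs)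
  define Q where "Q = (\<Prod>x\<leftarrow>xs. [:-x, 1:])"
  have IH: "\<And>j. cmod (coeff Q j) \<le> (1 + \<rho>) ^ length xs" using Cons by (auto simp: Q_def)
  have a: "cmod a \<le> \<rho>" using Cons by auto
  have "cmod (coeff ([:-a, 1:] * Q) i) \<le> cmod a * cmod (coeff Q i) + cmod (case i of 0 \<Rightarrow> 0 | Suc j \<Rightarrow> coeff Q j)"
    unfolding coeff_mult_lin by (metis norm_minus_cancel norm_mult norm_triangle_ineq mult_minus_left)
  also have "\<dots> \<le> \<rho> * (1 + \<rho>) ^ length xs + (1 + \<rho>) ^ length xs"
    apply (intro add_mono mult_mono a IH)
    using assms(2) IH by (auto split: nat.splits)
  also have "\<dots> = (1 + \<rho>) ^ length (a # xs)" by (simp add: algebra_simps)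
  finally show ?case by (simp add: Q_def)
qed

lemma deg_prod_lin: "degree (\<Prod>x\<leftarrow>xs. [:-x, 1:]) \<le> length xs" for xs :: "complex list"
proof (induction xs)
  case (Cons a xs)
  have "degree ([:-a, 1:] * (\<Prod>x\<leftarrow>xs. [:-x, 1:])) \<le> degree [:-a, 1:] + degree (\<Prod>x\<leftarrow>xs. [:-x, 1:])"
    by (rule degree_mult_le)
  then show ?case using Cons by simp
qed simp

lemma prod_lin_coeff_top:
  fixes xs :: "complex list"
  shows "coeff (\<Prod>x\<leftarrow>xs. [:-x, 1:]) (length xs) = 1"
    and "xs \<noteq> [] \<Longrightarrow> coeff (\<Prod>x\<leftarrow>xs. [:-x, 1:]) (length xs - 1) = - sum_list xs"
proof -
  show t: "coeff (\<Prod>x\<leftarrow>xs. [:-x, 1:]) (length xs) = 1" for xs :: "complex list"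
  proof (induction xs)
    case (Cons a xs)
    have "coeff (\<Prod>x\<leftarrow>xs. [:-x, 1:]) (Suc (length xs)) = 0"
      by (rule coeff_eq_0) (use deg_prod_lin[of xs] in simp)
    then show ?case using Cons by (simp add: coeff_mult_lin)
  qed simp
  show "xs \<noteq> [] \<Longrightarrow> coeff (\<Prod>x\<leftarrow>xs. [:-x, 1:]) (length xs - 1) = - sum_list xs"
  proof (induction xs)
    case (Cons a xs)
    show ?case
    proof (cases "xs = []")
      case True then show ?thesis by simp
    next
      case False
      then obtain k where k: "length xs = Suc k" by (cases xs) auto
      have "coeff (\<Prod>x\<leftarrow>a # xs. [:-x, 1:]) (length (a # xs) - 1)
          = - a * coeff (\<Prod>x\<leftarrow>xs. [:-x, 1:]) (length xs) + coeff (\<Prod>x\<leftarrow>xs. [:-x, 1:]) k"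
        using k by (simp add: coeff_mult_lin)
      also have "\<dots> = - a - sum_list xs" using t[of xs] Cons.IH False k by simp
      finally show ?thesis by simp
    qed
  qed simp
qed



lemma cm_coeff_bound:
  fixes p :: "complex poly"
  assumes d: "d \<ge> 2" and cm: "centered_monic d p" and \<rho>: "\<rho> \<ge> 0" and M: "M \<ge> 0"
    and cr: "\<And>c. poly (pderiv p) c = 0 \<Longrightarrow> cmod c \<le> \<rho>"
    and cv: "\<And>c. poly (pderiv p) c = 0 \<Longrightarrow> cmod (poly p c) \<le> M"
  shows "cmod (coeff p i) \<le> M + (real d + 1) * (real d * (1 + \<rho>) ^ (d - 1)) * (1 + \<rho>) ^ d"
proof -
  define \<beta> where "\<beta> = real d * (1 + \<rho>) ^ (d - 1)"
  have \<beta>0: "\<beta> \<ge> 0" using \<rho> by (simp add: \<beta>_def)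
  have pd0: "pderiv p \<noteq> 0" proof
    assume "pderiv p = 0"
    then have "degree (pderiv p) = 0" by simp
    with cm_pderiv_degree[OF cm] d show False by simp
  qed
  obtain xs where xs: "length xs = degree (pderiv p)" "set xs = {z. poly (pderiv p) z = 0}"
    "pderiv p = smult (lead_coeff (pderiv p)) (\<Prod>x\<leftarrow>xs. [:-x, 1:])" "mset xs = proots (pderiv p)"
    by (rule poly_factor_list[OF pd0])
  have lxs: "length xs = d - 1" using xs(1) cm_pderiv_degree[OF cm] by simp
  have pd: "pderiv p = smult (of_nat d) (\<Prod>x\<leftarrow>xs. [:-x, 1:])"
    using xs(3) cm_pderiv_lead'[OF cm] d by simp
  have cpd: "cmod (coeff (pderiv p) j) \<le> \<beta>" for j
  proof -
    have "cmod (coeff (\<Prod>x\<leftarrow>xs. [:-x, 1:]) j) \<le> (1 + \<rho>) ^ (d - 1)"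
      using prod_lin_coeff_bound[of xs \<rho> j] cr xs(2) \<rho> lxs by auto
    then show ?thesis by (subst pd) (simp add: \<beta>_def norm_mult mult_left_mono)
  qed
  have cs: "cmod (coeff p (Suc j)) \<le> \<beta>" for j
  proof -
    have "cmod (coeff (pderiv p) j) = cmod (of_nat (Suc j) * coeff p (Suc j))" by (simp only: coeff_pderiv)
    also have "\<dots> = cmod (coeff p (Suc j)) * real (Suc j)" by (simp only: norm_mult norm_of_nat mult.commute)
    finally have "cmod (coeff p (Suc j)) * real (Suc j) \<le> \<beta>" using cpd[of j] by simp
    moreover have "cmod (coeff p (Suc j)) \<le> cmod (coeff p (Suc j)) * real (Suc j)"
      by (simp add: mult_le_cancel_left1)
    ultimately show ?thesis by linarith
  qed
  have pw: "(1 + \<rho>) ^ d \<ge> 1" using \<rho> by simp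
  have big: "\<beta> \<le> M + (real d + 1) * \<beta> * (1 + \<rho>) ^ d"
  proof -
    have "\<beta> \<le> \<beta> * (1 + \<rho>) ^ d" using pw \<beta>0 by (simp add: mult_le_cancel_left1)
    also have "\<dots> \<le> (real d + 1) * (\<beta> * (1 + \<rho>) ^ d)"
      using \<beta>0 pw mult_right_mono[of 1 "real d + 1" "\<beta> * (1 + \<rho>) ^ d"] by simp
    also have "\<dots> = (real d + 1) * \<beta> * (1 + \<rho>) ^ d" by (simp add: mult.assoc)
    finally show ?thesis using M by linarith
  qed
  show ?thesis
  proof (cases i)
    case (Suc j) then show ?thesis using cs[of j] big by (simp add: \<beta>_def)
  next
    case 0
    have "xs \<noteq> []" using lxs d by auto
    then obtain c where c: "c \<in> set xs" by (cases xs) auto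
    have crc: "poly (pderiv p) c = 0" using c xs(2) by auto
    obtain k where k: "d = Suc k" using d by (cases d) auto
    have "poly p c = (\<Sum>i\<le>Suc k. coeff p i * c^i)" using poly_sum_N[of p "Suc k" c] cm_degree[OF cm] k by simp
    also have "\<dots> = coeff p 0 + (\<Sum>i\<le>k. coeff p (Suc i) * c ^ Suc i)" by (simp del: sum.atMost_Suc add: sum.atMost_Suc_shift)
    finally have e: "coeff p 0 = poly p c - (\<Sum>i\<le>k. coeff p (Suc i) * c ^ Suc i)" by simp
    have "cmod (\<Sum>i\<le>k. coeff p (Suc i) * c ^ Suc i) \<le> (\<Sum>i\<le>k. cmod (coeff p (Suc i) * c ^ Suc i))"
      by (rule norm_sum)
    also have "\<dots> \<le> (\<Sum>i\<le>k. \<beta> * (1 + \<rho>) ^ d)"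
    proof (intro sum_mono)
      fix i assume "i \<in> {..k}"
      then have ik: "Suc i \<le> d" using k by simp
      have "cmod c ^ Suc i \<le> (1 + \<rho>) ^ Suc i" using cr[OF crc] by (intro power_mono) auto
      also have "\<dots> \<le> (1 + \<rho>) ^ d" using \<rho> ik by (intro power_increasing) auto
      finally have "cmod c ^ Suc i \<le> (1 + \<rho>) ^ d" .
      then show "cmod (coeff p (Suc i) * c ^ Suc i) \<le> \<beta> * (1 + \<rho>) ^ d"
        using cs[of i] \<beta>0 by (simp add: norm_mult norm_power mult_mono)
    qed
    also have "\<dots> = real d * \<beta> * (1 + \<rho>) ^ d" using k by simp
    finally have s: "cmod (\<Sum>i\<le>k. coeff p (Suc i) * c ^ Suc i) \<le> real d * \<beta> * (1 + \<rho>) ^ d" .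
    have "cmod (coeff p 0) \<le> cmod (poly p c) + cmod (\<Sum>i\<le>k. coeff p (Suc i) * c ^ Suc i)"
      unfolding e by (rule norm_triangle_ineq4)
    also have "\<dots> \<le> M + real d * \<beta> * (1 + \<rho>) ^ d" using cv[OF crc] s by linarith
    also have "\<dots> \<le> M + (real d + 1) * \<beta> * (1 + \<rho>) ^ d" using \<beta>0 pw by (simp add: mult_right_mono)
    finally show ?thesis using 0 by (simp add: \<beta>_def)
  qed
qed



lemma sum_count_le_size: "finite A \<Longrightarrow> (\<Sum>x\<in>A. count M x) \<le> size M"
proof (induction M)
  case empty then show ?case by simp
next
  case (add a M)
  have "(\<Sum>x\<in>A. count (add_mset a M) x) = (\<Sum>x\<in>A. count M x + (if x = a then 1 else 0))"
    by (intro sum.cong) auto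
  also have "\<dots> = (\<Sum>x\<in>A. count M x) + (\<Sum>x\<in>A. (if x = a then 1 else 0))" by (rule sum.distrib)
  also have "(\<Sum>x\<in>A. (if x = a then 1 else 0::nat)) \<le> 1" using add.prems by (simp add: sum.delta)
  finally show ?case using add by simp
qed

lemma sum_list_const_elems: "(\<forall>x\<in>set xs. x = c) \<Longrightarrow> sum_list xs = of_nat (length xs) * c"
  for c :: complex by (induction xs) (auto simp: algebra_simps)

lemma all_cv_zero:
  fixes q :: "complex poly"
  assumes d: "d \<ge> 2" and cm: "centered_monic d q"
    and cv: "\<And>y. poly (pderiv q) y = 0 \<Longrightarrow> poly q y = 0"
    and u: "poly (pderiv q) u = 0"
  shows "u = 0"
proof -
  have q0: "q \<noteq> 0" using cm_degree[OF cm] d by auto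
  have pd0: "pderiv q \<noteq> 0" proof
    assume "pderiv q = 0"
    then have "degree (pderiv q) = 0" by simp
    with cm_pderiv_degree[OF cm] d show False by simp
  qed
  obtain xs where xs: "length xs = degree (pderiv q)" "set xs = {z. poly (pderiv q) z = 0}"
    "pderiv q = smult (lead_coeff (pderiv q)) (\<Prod>x\<leftarrow>xs. [:-x, 1:])" "mset xs = proots (pderiv q)"
    using poly_factor_list[OF pd0] by blast
  have lxs: "length xs = d - 1" using xs(1) cm_pderiv_degree[OF cm] by simp
  have pd: "pderiv q = smult (of_nat d) (\<Prod>x\<leftarrow>xs. [:-x, 1:])"
    using xs(3) cm_pderiv_lead'[OF cm] d by simp
  define R where "R = set xs"
  have ord: "order c q = Suc (count (mset xs) c)" if "c \<in> R" for c
  proof -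
    have "poly (pderiv q) c = 0" using that xs(2) R_def by auto
    then have "poly q c = 0" by (rule cv)
    then have "order c q = Suc (order c (pderiv q))" using order_pderiv[OF q0] by blast
    then show ?thesis using xs(4) pd0 by simp
  qed
  have "(\<Sum>c\<in>R. count (proots q) c) \<le> size (proots q)" by (rule sum_count_le_size) (simp add: R_def)
  also have "\<dots> = d" using size_proots_complex[of q] cm_degree[OF cm] by simp
  finally have s1: "(\<Sum>c\<in>R. count (proots q) c) \<le> d" .
  have "(\<Sum>c\<in>R. count (proots q) c) = (\<Sum>c\<in>R. Suc (count (mset xs) c))"
    using ord q0 by (intro sum.cong) auto
  also have "\<dots> = (\<Sum>c\<in>R. count (mset xs) c) + card R" by (rule sum_Suc)
  also have "(\<Sum>c\<in>R. count (mset xs) c) = length xs"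
    unfolding R_def count_mset by (rule sum_count_set) auto
  finally have "length xs + card R \<le> d" using s1 by simp
  then have cR: "card R \<le> 1" using lxs d by simp
  have "xs \<noteq> []" using lxs d by auto
  then obtain c0 where c0: "c0 \<in> R" unfolding R_def by (cases xs) auto
  have allc: "\<forall>x\<in>set xs. x = c0"
  proof
    fix x assume "x \<in> set xs"
    then have "x \<in> R" by (simp add: R_def)
    with c0 cR show "x = c0" by (metis One_nat_def R_def card_le_Suc0_iff_eq finite_set)
  qed
  obtain k where k: "d - 1 = Suc k" using d by (cases "d - 1") auto
  have "coeff (pderiv q) k = of_nat (Suc k) * coeff q (Suc k)" by (simp add: coeff_pderiv)
  also have "coeff q (Suc k) = 0" using cm_cent[OF cm] k by simp
  finally have z1: "coeff (pderiv q) k = 0" by simp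
  have "coeff (pderiv q) k = of_nat d * (- sum_list xs)"
  proof -
    have kk: "length xs - 1 = k" using lxs k by simp
    show ?thesis using prod_lin_coeff_top(2)[OF \<open>xs \<noteq> []\<close>] unfolding kk by (subst pd) simp
  qed
  then have "sum_list xs = 0" using z1 d by simp
  then have "of_nat (d - 1) * c0 = 0" using sum_list_const_elems[OF allc] lxs by simp
  then have "c0 = 0" using d by simp
  moreover have "u \<in> R" using u xs(2) R_def by auto
  ultimately show ?thesis using allc R_def by auto
qed



lemma normalize_cm:
  fixes p :: "complex poly" and s :: real
  assumes cm: "centered_monic d p" and s: "s > 0"
  shows "centered_monic d (smult (1 / of_real s ^ d) (p \<circ>\<^sub>p [:0, of_real s:]))"
proof (rule cm_intro)
  have s0: "(of_real s :: complex) \<noteq> 0" using s by simp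
  show "coeff (smult (1 / complex_of_real s ^ d) (p \<circ>\<^sub>p [:0, complex_of_real s:])) d = 1"
    using s0 cm_lead[OF cm] by (simp add: coeff_pcompose_linear)
  show "coeff (smult (1 / complex_of_real s ^ d) (p \<circ>\<^sub>p [:0, complex_of_real s:])) i = 0" if "d < i" for i
    using that cm_degree[OF cm] by (simp add: coeff_pcompose_linear coeff_eq_0)
  show "coeff (smult (1 / complex_of_real s ^ d) (p \<circ>\<^sub>p [:0, complex_of_real s:])) (d - 1) = 0"
    using cm_cent[OF cm] by (simp add: coeff_pcompose_linear)
qed

lemma normalize_poly:
  "poly (smult (1 / of_real s ^ d) (p \<circ>\<^sub>p [:0, of_real s:])) z = poly p (of_real s * z) / of_real s ^ d"
  for p :: "complex poly"
  by (simp add: poly_pcompose mult.commute)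

lemma normalize_crit:
  fixes p :: "complex poly" and s :: real
  assumes s: "s > 0"
  shows "poly (pderiv (smult (1 / of_real s ^ d) (p \<circ>\<^sub>p [:0, of_real s:]))) z = 0 \<longleftrightarrow> poly (pderiv p) (of_real s * z) = 0"
proof -
  have s0: "(of_real s :: complex) \<noteq> 0" using s by simp
  have "poly (pderiv (smult (1 / of_real s ^ d) (p \<circ>\<^sub>p [:0, of_real s:]))) z
     = (1 / of_real s ^ d) * (poly (pderiv p) (of_real s * z) * of_real s)"
    by (simp add: pderiv_smult pderiv_pcompose poly_pcompose pderiv_pCons mult.commute)
  then show ?thesis using s0 by simp
qed

lemma crit_bound:
  assumes d: "d \<ge> 2" and M: "M \<ge> 0"
  shows "\<exists>C. \<forall>p. centered_monic d p \<and> (\<forall>c. poly (pderiv p) c = 0 \<longrightarrow> cmod (poly p c) \<le> M)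
           \<longrightarrow> (\<forall>c. poly (pderiv p) c = 0 \<longrightarrow> cmod c \<le> C)"
proof (rule ccontr)
  assume neg: "\<not> ?thesis"
  have ex: "\<exists>p c. centered_monic d p \<and> (\<forall>c. poly (pderiv p) c = 0 \<longrightarrow> cmod (poly p c) \<le> M)
      \<and> poly (pderiv p) c = 0 \<and> cmod c > real n + 1" for n :: nat
  proof -
    from neg obtain pp where pp: "centered_monic d pp"
      "\<forall>c. poly (pderiv pp) c = 0 \<longrightarrow> cmod (poly pp c) \<le> M"
      "\<not> (\<forall>c. poly (pderiv pp) c = 0 \<longrightarrow> cmod c \<le> real n + 1)" by blast
    then obtain cc where "poly (pderiv pp) cc = 0" "cmod cc > real n + 1" by (auto simp: not_le)
    with pp show ?thesis by blast
  qed
  have "\<forall>n. \<exists>pc. centered_monic d (fst pc) \<and> (\<forall>c. poly (pderiv (fst pc)) c = 0 \<longrightarrow> cmod (poly (fst pc) c) \<le> M)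
      \<and> poly (pderiv (fst pc)) (snd pc) = 0 \<and> cmod (snd pc) > real n + 1"
    using ex by simp
  then obtain g where g: "\<forall>n. centered_monic d (fst (g n)) \<and> (\<forall>c. poly (pderiv (fst (g n))) c = 0 \<longrightarrow> cmod (poly (fst (g n)) c) \<le> M)
      \<and> poly (pderiv (fst (g n))) (snd (g n)) = 0 \<and> cmod (snd (g n)) > real n + 1"
    by (rule choice[THEN exE])
  define p where "p n = fst (g n)" for n
  define c where "c n = snd (g n)" for n
  have p: "\<And>n. centered_monic d (p n)"
    "\<And>n w. poly (pderiv (p n)) w = 0 \<Longrightarrow> cmod (poly (p n) w) \<le> M"
    "\<And>n. poly (pderiv (p n)) (c n) = 0" "\<And>n. cmod (c n) > real n + 1"
    using g by (auto simp: p_def c_def)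
  define R where "R n = {z. poly (pderiv (p n)) z = 0}" for n
  have pd0: "pderiv (p n) \<noteq> 0" for n
  proof
    assume "pderiv (p n) = 0"
    then have "degree (pderiv (p n)) = 0" by simp
    with cm_pderiv_degree[OF p(1)] d show False by simp
  qed
  have finR: "finite (R n)" for n using poly_roots_finite[OF pd0] by (simp add: R_def)
  have cR: "c n \<in> R n" for n using p(3) by (simp add: R_def)
  define \<rho> where "\<rho> n = Max (cmod ` R n)" for n
  have \<rho>ge: "cmod z \<le> \<rho> n" if "z \<in> R n" for z n
    unfolding \<rho>_def using finR that by (intro Max_ge) auto
  have "\<rho> n \<in> cmod ` R n" for n unfolding \<rho>_def using finR cR by (intro Max_in) auto
  then have "\<forall>n. \<exists>v. v \<in> R n \<and> cmod v = \<rho> n" by (metis imageE)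
  then obtain u' where "\<forall>n. u' n \<in> R n \<and> cmod (u' n) = \<rho> n" by (rule choice[THEN exE])
  then have u': "\<And>n. u' n \<in> R n" "\<And>n. cmod (u' n) = \<rho> n" by auto
  have \<rho>big: "\<rho> n > real n + 1" for n using \<rho>ge[OF cR, of n] p(4)[of n] by linarith
  have \<rho>pos: "\<rho> n > 0" for n using \<rho>big[of n] by linarith
  define P where "P n = smult (1 / of_real (\<rho> n) ^ d) (p n \<circ>\<^sub>p [:0, of_real (\<rho> n):])" for n
  have cmP: "centered_monic d (P n)" for n unfolding P_def by (rule normalize_cm[OF p(1) \<rho>pos])
  have polyP: "poly (P n) z = poly (p n) (of_real (\<rho> n) * z) / of_real (\<rho> n) ^ d" for n z
    unfolding P_def by (rule normalize_poly)
  have critP: "poly (pderiv (P n)) z = 0 \<longleftrightarrow> poly (pderiv (p n)) (of_real (\<rho> n) * z) = 0" for n z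
    unfolding P_def by (rule normalize_crit[OF \<rho>pos])
  have Pcr: "cmod z \<le> 1" if "poly (pderiv (P n)) z = 0" for n z
  proof -
    have "of_real (\<rho> n) * z \<in> R n" using that critP R_def by simp
    then have "\<rho> n * cmod z \<le> \<rho> n" using \<rho>ge \<rho>pos[of n] by (fastforce simp: norm_mult)
    then show ?thesis using \<rho>pos[of n] by simp
  qed
  have Pcv: "cmod (poly (P n) z) \<le> M / (real n + 1)" if "poly (pderiv (P n)) z = 0" for n z
  proof -
    have h: "cmod (poly (p n) (of_real (\<rho> n) * z)) \<le> M" using that critP p(2) by blast
    have r1: "\<rho> n \<ge> 1" using \<rho>big[of n] by simp
    have "\<rho> n ^ 1 \<le> \<rho> n ^ d" using r1 d by (intro power_increasing) auto
    then have rd: "\<rho> n \<le> \<rho> n ^ d" by simp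
    have "cmod (poly (P n) z) = cmod (poly (p n) (of_real (\<rho> n) * z)) / \<rho> n ^ d"
      using \<rho>pos[of n] by (simp add: polyP norm_divide norm_power)
    also have "\<dots> \<le> M / \<rho> n ^ d" using h \<rho>pos[of n] by (simp add: divide_right_mono)
    also have "\<dots> \<le> M / \<rho> n" using M rd \<rho>pos[of n] by (intro divide_left_mono) auto
    also have "\<dots> \<le> M / (real n + 1)" using M \<rho>big[of n] by (intro divide_left_mono) auto
    finally show ?thesis .
  qed
  have PcvM: "cmod (poly (P n) z) \<le> M" if "poly (pderiv (P n)) z = 0" for n z
  proof -
    have "M / (real n + 1) \<le> M" using M by (simp add: divide_le_eq mult_le_cancel_left1)
    then show ?thesis using Pcv[OF that] by linarith
  qed
  define u where "u n = u' n / of_real (\<rho> n)" for n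
  have ucr: "poly (pderiv (P n)) (u n) = 0" for n
  proof -
    have "of_real (\<rho> n) * u n = u' n" using \<rho>pos[of n] by (simp add: u_def)
    then show ?thesis using critP u'(1) R_def by simp
  qed
  have u1: "cmod (u n) = 1" for n using u'(2) \<rho>pos[of n] by (simp add: u_def norm_divide)
  define F where "F = M + (real d + 1) * (real d * (1 + 1) ^ (d - 1)) * (1 + 1) ^ d"
  have fbox: "(\<lambda>i. coeff (P n) i) \<in> {f. \<forall>i. cmod (f i) \<le> F}" for n
    using cm_coeff_bound[OF d cmP, of 1 M] Pcr PcvM M by (auto simp: F_def)
  obtain l r where r: "strict_mono r" "((\<lambda>n i. coeff (P n) i) \<circ> r) \<longlonglongrightarrow> l"
    using compact_imp_seq_compact[OF compact_box[of F]] fbox unfolding seq_compact_def by metis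
  have "(u \<circ> r) n \<in> cball 0 1" for n using u1 by simp
  then obtain u0 r2 where r2: "strict_mono r2" "((u \<circ> r) \<circ> r2) \<longlonglongrightarrow> u0"
    using compact_imp_seq_compact[OF compact_cball[of "0::complex" 1]] unfolding seq_compact_def by metis
  define \<sigma> where "\<sigma> = r \<circ> r2"
  have \<sigma>: "strict_mono \<sigma>" using r(1) r2(1) by (simp add: \<sigma>_def strict_mono_o)
  have lim1: "(\<lambda>n i. coeff (P (\<sigma> n)) i) \<longlonglongrightarrow> l"
    using LIMSEQ_subseq_LIMSEQ[OF r(2) r2(1)] by (simp add: \<sigma>_def o_def)
  have limu: "(\<lambda>n. u (\<sigma> n)) \<longlonglongrightarrow> u0" using r2(2) by (simp add: \<sigma>_def o_def)
  obtain q where q: "centered_monic d q" "\<And>i. (\<lambda>n. coeff (P (\<sigma> n)) i) \<longlonglongrightarrow> coeff q i"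
    using limit_poly[of d "\<lambda>n. P (\<sigma> n)" l] cmP lim1 by blast
  have qu: "poly (pderiv q) u0 = 0"
  proof -
    have "(\<lambda>n. poly (pderiv (P (\<sigma> n))) (u (\<sigma> n))) \<longlonglongrightarrow> poly (pderiv q) u0"
      by (rule poly_tendsto[OF coeff_pderiv_tendsto[OF q(2)] _ _ limu])
         (use cm_pderiv_degree[OF cmP] cm_pderiv_degree[OF q(1)] in auto)
    then show ?thesis using ucr by (simp add: LIMSEQ_const_iff)
  qed
  have u01: "cmod u0 = 1"
  proof -
    have "(\<lambda>n. cmod (u (\<sigma> n))) \<longlonglongrightarrow> cmod u0" by (rule tendsto_norm[OF limu])
    then show ?thesis using u1 by (simp add: LIMSEQ_const_iff)
  qed
  have qcv: "poly q y = 0" if y: "poly (pderiv q) y = 0" for y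
  proof -
    obtain cc where cc: "\<And>n. poly (pderiv (P (\<sigma> n))) (cc n) = 0"
      "(\<lambda>n. poly (P (\<sigma> n)) (cc n)) \<longlonglongrightarrow> poly q y"
      using crit_approx[OF d, of "\<lambda>n. P (\<sigma> n)" q y] cmP q y by blast
    have bnd: "norm (poly (P (\<sigma> n)) (cc n)) \<le> M * inverse (real (Suc n))" for n
    proof -
      have "cmod (poly (P (\<sigma> n)) (cc n)) \<le> M / (real (\<sigma> n) + 1)" by (rule Pcv[OF cc(1)])
      also have "\<dots> \<le> M / (real n + 1)" using M seq_suble[OF \<sigma>, of n] by (intro divide_left_mono) auto
      finally show ?thesis by (simp add: divide_inverse add.commute)
    qed
    have "(\<lambda>n. M * inverse (real (Suc n))) \<longlonglongrightarrow> 0"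
      using tendsto_mult_right_zero[OF LIMSEQ_inverse_real_of_nat] by simp
    then have "(\<lambda>n. poly (P (\<sigma> n)) (cc n)) \<longlonglongrightarrow> 0"
      by (rule Lim_null_comparison[rotated]) (use bnd in auto)
    then show ?thesis using cc(2) LIMSEQ_unique by blast
  qed
  have "u0 = 0" by (rule all_cv_zero[OF d q(1) qcv qu])
  then show False using u01 by simp
qed

lemma compact_Poly_mt:
  assumes d: "d \<ge> 2" and K: "compact K"
  shows "compact (Poly_mt d K)"
proof -
  obtain M where M: "M \<ge> 0" "\<And>v. v \<in> K \<Longrightarrow> cmod v \<le> M"
    using compact_imp_bounded[OF K] unfolding bounded_iff by (meson norm_ge_zero order_trans linorder_linear)
  obtain C where C: "\<And>p c. centered_monic d p \<Longrightarrow> (\<forall>c. poly (pderiv p) c = 0 \<longrightarrow> cmod (poly p c) \<le> M)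
           \<Longrightarrow> poly (pderiv p) c = 0 \<Longrightarrow> cmod c \<le> C"
    using crit_bound[OF d M(1)] by metis
  define C' where "C' = max C 0"
  define F where "F = M + (real d + 1) * (real d * (1 + C') ^ (d - 1)) * (1 + C') ^ d"
  have sub: "Poly_mt d K \<subseteq> {f. \<forall>i. cmod (f i) \<le> F}"
  proof
    fix f assume "f \<in> Poly_mt d K"
    then obtain p where p: "f = (\<lambda>i. coeff p i)" "centered_monic d p" "critical_values p \<subseteq> K"
      by (auto simp: Poly_mt_def)
    have cv: "\<And>c. poly (pderiv p) c = 0 \<Longrightarrow> cmod (poly p c) \<le> M"
      using p(3) M(2) by (auto simp: critical_values_def)
    have cr: "\<And>c. poly (pderiv p) c = 0 \<Longrightarrow> cmod c \<le> C'"
      using C[OF p(2)] cv unfolding C'_def by fastforce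
    show "f \<in> {f. \<forall>i. cmod (f i) \<le> F}"
      using cm_coeff_bound[OF d p(2), of C' M] cr cv M(1) p(1) by (auto simp: F_def C'_def)
  qed
  have "compact ({f. \<forall>i. cmod (f i) \<le> F} \<inter> Poly_mt d K)"
    by (rule compact_Int_closed[OF compact_box closed_Poly_mt[OF d compact_imp_closed[OF K]]])
  moreover have "{f. \<forall>i. cmod (f i) \<le> F} \<inter> Poly_mt d K = Poly_mt d K" using sub by blast
  ultimately show ?thesis by simp
qed



lemma interp:
  fixes g :: "complex \<Rightarrow> complex"
  assumes "finite S"
  shows "\<exists>h. degree h \<le> card S - 1 \<and> (\<forall>c\<in>S. poly h c = g c)"
  using assms
proof (induction S rule: finite_induct)
  case empty
  then show ?case by (intro exI[of _ 0]) simp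
next
  case (insert a S)
  obtain h where h: "degree h \<le> card S - 1" "\<forall>c\<in>S. poly h c = g c" using insert by blast
  define L where "L = (\<Prod>s\<in>S. [:-s, 1:])"
  have La: "poly L a \<noteq> 0" using insert by (simp add: L_def poly_prod)
  have Lc: "poly L c = 0" if "c \<in> S" for c
    using that insert by (simp add: L_def poly_prod prod_zero_iff)
  have degL: "degree L \<le> card S"
  proof -
    have "degree L \<le> sum (degree \<circ> (\<lambda>s. [:-s, 1:])) S" unfolding L_def by (rule degree_prod_sum_le[OF insert(1)])
    also have "\<dots> = card S" by simp
    finally show ?thesis .
  qed
  define k where "k = (g a - poly h a) / poly L a"
  define h' where "h' = h + smult k L"
  have "degree h' \<le> max (degree h) (degree (smult k L))" unfolding h'_def by (rule degree_add_le_max)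
  also have "\<dots> \<le> card S" using h(1) degL degree_smult_le[of k L] by linarith
  also have "\<dots> = card (insert a S) - 1" using insert by simp
  finally have "degree h' \<le> card (insert a S) - 1" .
  moreover have "\<forall>c\<in>insert a S. poly h' c = g c"
    using h(2) Lc La by (auto simp: h'_def k_def)
  ultimately show ?case by blast
qed

lemma sep_finite:
  fixes S :: "complex set"
  assumes "finite S"
  shows "\<exists>\<delta>>0. \<forall>x\<in>S. \<forall>y\<in>S. x \<noteq> y \<longrightarrow> \<delta> \<le> cmod (x - y)"
  using assms
proof (induction S rule: finite_induct)
  case empty then show ?case by (intro exI[of _ 1]) simp
next
  case (insert a S)
  obtain \<delta> where \<delta>: "\<delta> > 0" "\<forall>x\<in>S. \<forall>y\<in>S. x \<noteq> y \<longrightarrow> \<delta> \<le> cmod (x - y)" using insert by blast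
  obtain \<delta>a where \<delta>a: "\<delta>a > 0" "\<forall>x\<in>S. x \<noteq> a \<longrightarrow> \<delta>a \<le> dist a x" using finite_set_avoid[OF insert(1)] by blast
  show ?case
  proof (intro exI[of _ "min \<delta> \<delta>a"] conjI ballI impI)
    show "min \<delta> \<delta>a > 0" using \<delta> \<delta>a by simp
    fix x y assume xy: "x \<in> insert a S" "y \<in> insert a S" "x \<noteq> y"
    show "min \<delta> \<delta>a \<le> cmod (x - y)"
    proof (cases "x = a")
      case True
      then have "y \<in> S" using xy by auto
      then show ?thesis using \<delta>a True xy by (auto simp: dist_norm)
    next
      case False
      then have x: "x \<in> S" using xy by auto
      show ?thesis
      proof (cases "y = a")
        case True
        then show ?thesis using \<delta>a x xy by (auto simp: dist_norm norm_minus_commute)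
      next
        case False
        then have "y \<in> S" using xy by auto
        then have "\<delta> \<le> cmod (x - y)" using \<delta> x xy by auto
        then show ?thesis by linarith
      qed
    qed
  qed
qed

lemma prod_list_le_factor:
  fixes f g :: "'a \<Rightarrow> real"
  assumes "\<forall>x\<in>set xs. 0 \<le> f x \<and> f x \<le> k * g x"
  shows "(\<Prod>x\<leftarrow>xs. f x) \<le> k ^ length xs * (\<Prod>x\<leftarrow>xs. g x)"
  using assms
proof (induction xs)
  case (Cons a xs)
  have fa: "0 \<le> f a" "f a \<le> k * g a" using Cons.prems by auto
  have IH: "(\<Prod>x\<leftarrow>xs. f x) \<le> k ^ length xs * (\<Prod>x\<leftarrow>xs. g x)" using Cons by auto
  have p0: "0 \<le> (\<Prod>x\<leftarrow>xs. f x)" using Cons.prems by (intro prod_list_nonneg) auto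
  have "f a * (\<Prod>x\<leftarrow>xs. f x) \<le> (k * g a) * (k ^ length xs * (\<Prod>x\<leftarrow>xs. g x))"
    using fa IH p0 by (meson mult_mono order_trans)
  then show ?case by (simp add: algebra_simps)
qed simp



lemma perturb_crit:
  fixes p h :: "complex poly" and W :: "complex \<Rightarrow> complex"
  assumes d: "d \<ge> 2" and cm: "centered_monic d p" and cvK: "critical_values p \<subseteq> K"
    and eps: "\<epsilon> > 0"
    and good: "\<And>v t y. v \<in> K \<Longrightarrow> 0 < t \<Longrightarrow> t < 1 \<Longrightarrow> cmod (y - (v + of_real t * W v)) \<le> \<epsilon> * t \<Longrightarrow> y \<in> Y"
    and degh: "degree h < d - 1"
    and hW: "\<And>c. poly (pderiv p) c = 0 \<Longrightarrow> poly h c = W (poly p c)"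
  shows "\<exists>T>0. \<forall>t. 0 < t \<and> t < T \<longrightarrow> critical_values (p + smult (of_real t) h) \<subseteq> Y"
proof -
  define S where "S = {z. poly (pderiv p) z = 0}"
  have pd0: "pderiv p \<noteq> 0"
  proof
    assume "pderiv p = 0"
    then have "degree (pderiv p) = 0" by simp
    with cm_pderiv_degree[OF cm] d show False by simp
  qed
  obtain xs where xs: "length xs = degree (pderiv p)" "set xs = {z. poly (pderiv p) z = 0}"
    "pderiv p = smult (lead_coeff (pderiv p)) (\<Prod>x\<leftarrow>xs. [:-x, 1:])" "mset xs = proots (pderiv p)"
    by (rule poly_factor_list[OF pd0])
  have lxs: "length xs = d - 1" using xs(1) cm_pderiv_degree[OF cm] by simp
  have pd: "pderiv p = smult (of_nat d) (\<Prod>x\<leftarrow>xs. [:-x, 1:])"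
    using xs(3) cm_pderiv_lead'[OF cm] d by simp
  have pdval: "cmod (poly (pderiv p) w) = real d * (\<Prod>x\<leftarrow>xs. cmod (w - x))" for w
    by (subst pd) (simp add: poly_prod_lin norm_mult norm_prod_list_c)
  have finS: "finite S" using poly_roots_finite[OF pd0] by (simp add: S_def)
  obtain \<delta> where \<delta>: "\<delta> > 0" "\<And>x y. x \<in> S \<Longrightarrow> y \<in> S \<Longrightarrow> x \<noteq> y \<Longrightarrow> \<delta> \<le> cmod (x - y)"
    using sep_finite[OF finS] by blast
  define pt where "pt t = p + smult (of_real t) h" for t :: real
  have cmt: "centered_monic d (pt t)" for t
  proof (rule cm_intro)
    have "coeff h d = 0" "coeff h (d - 1) = 0" using degh by (auto intro: coeff_eq_0)
    then show "coeff (pt t) d = 1" "coeff (pt t) (d - 1) = 0"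
      using cm_lead[OF cm] cm_cent[OF cm] by (auto simp: pt_def)
    show "coeff (pt t) i = 0" if "d < i" for i
      using that degh cm_degree[OF cm] by (auto simp: pt_def coeff_eq_0)
  qed
  have pdt: "pderiv (pt t) = pderiv p + smult (of_real t) (pderiv h)" for t
    by (simp add: pt_def pderiv_add pderiv_smult)
  define A where "A = (\<Sum>i<d - 1. cmod (coeff (pderiv p) i) + cmod (coeff (pderiv h) i))"
  define Z0 where "Z0 = max 1 (A / real d)"
  have Z01: "Z0 \<ge> 1" by (simp add: Z0_def)
  have zb: "cmod z \<le> Z0" if t: "0 \<le> t" "t \<le> 1" and z: "poly (pderiv (pt t)) z = 0" for t z
  proof -
    have deg: "degree (pderiv (pt t)) = d - 1" using cm_pderiv_degree[OF cmt] .
    have lc: "lead_coeff (pderiv (pt t)) = of_nat d" using cm_pderiv_lead'[OF cmt] d by simp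
    have sumle: "(\<Sum>i<d - 1. cmod (coeff (pderiv (pt t)) i)) \<le> A" unfolding A_def
    proof (intro sum_mono)
      fix i
      have "cmod (coeff (pderiv (pt t)) i) = cmod (coeff (pderiv p) i + of_real t * coeff (pderiv h) i)"
        by (simp add: pdt)
      also have "\<dots> \<le> cmod (coeff (pderiv p) i) + t * cmod (coeff (pderiv h) i)"
        using t by (metis abs_of_nonneg norm_mult norm_of_real norm_triangle_ineq)
      also have "\<dots> \<le> cmod (coeff (pderiv p) i) + cmod (coeff (pderiv h) i)"
        using t by (simp add: mult_left_le_one_le)
      finally show "cmod (coeff (pderiv (pt t)) i) \<le> cmod (coeff (pderiv p) i) + cmod (coeff (pderiv h) i)" .
    qed
    have "cmod z \<le> max 1 ((\<Sum>i<degree (pderiv (pt t)). cmod (coeff (pderiv (pt t)) i)) / cmod (lead_coeff (pderiv (pt t))))"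
      using cauchy_bound[OF _ z] deg d by simp
    also have "\<dots> = max 1 ((\<Sum>i<d - 1. cmod (coeff (pderiv (pt t)) i)) / real d)"
      using cm_pderiv_lead[OF cmt, of t] d by (simp only: deg norm_of_nat)
    also have "\<dots> \<le> Z0" unfolding Z0_def using sumle by (intro max.mono divide_right_mono) auto
    finally show ?thesis .
  qed
  have pt0: "pt 0 = p" by (simp add: pt_def)
  have cS: "cmod c \<le> Z0" if "poly (pderiv p) c = 0" for c
    using zb[of 0 c] that pt0 by simp
  define H where "H = (\<Sum>i\<le>degree (pderiv h). cmod (coeff (pderiv h) i) * Z0 ^ i)"
  have H: "cmod (poly (pderiv h) z) \<le> H" if "cmod z \<le> Z0" for z
    unfolding H_def by (rule poly_bound[OF that])
  have H0: "H \<ge> 0" unfolding H_def using Z01 by (intro sum_nonneg) simp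
  have hlip: "cmod (poly h z - poly h c) \<le> H * cmod (z - c)" if "cmod z \<le> Z0" "cmod c \<le> Z0" for z c
  proof (rule field_differentiable_bound[of "cball 0 Z0"])
    show "convex (cball (0::complex) Z0)" by simp
    show "(poly h has_field_derivative poly (pderiv h) x) (at x within cball 0 Z0)" for x
      by (rule has_field_derivative_at_within) (rule poly_DERIV)
    show "cmod (poly (pderiv h) x) \<le> H" if "x \<in> cball 0 Z0" for x using that H by simp
  qed (use that in auto)
  define \<kappa> where "\<kappa> = (4/3) ^ (d - 1) * H + H"
  have \<kappa>0: "\<kappa> \<ge> 0" using H0 by (simp add: \<kappa>_def)
  define \<eta>0 where "\<eta>0 = min (\<delta> / 4) (\<epsilon> / (\<kappa> + 1))"
  have \<eta>0pos: "\<eta>0 > 0" using \<delta> eps \<kappa>0 by (simp add: \<eta>0_def)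
  define T where "T = min 1 (real d * \<eta>0 ^ (d - 1) / (H + 1))"
  have Tpos: "T > 0" using \<eta>0pos H0 d by (simp add: T_def)
  have main: "critical_values (pt t) \<subseteq> Y" if t: "0 < t" "t < T" for t
  proof
    fix y assume "y \<in> critical_values (pt t)"
    then obtain z where yz: "y = poly (pt t) z" and z: "poly (pderiv (pt t)) z = 0"
      by (auto simp: critical_values_def)
    have t1: "t < 1" using t by (simp add: T_def)
    have zZ: "cmod z \<le> Z0" using zb[of t z] t1 t z by simp
    have pz: "poly (pderiv p) z = - (of_real t * poly (pderiv h) z)"
      using z by (simp add: pdt eq_neg_iff_add_eq_0)
    have pzb: "cmod (poly (pderiv p) z) \<le> t * H"
    proof -
      have "cmod (poly (pderiv p) z) = t * cmod (poly (pderiv h) z)"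
        using t by (simp add: pz norm_mult)
      also have "\<dots> \<le> t * H" using H[OF zZ] t by (simp add: mult_left_mono)
      finally show ?thesis .
    qed
    have degp: "degree (pderiv p) \<ge> 1" using cm_pderiv_degree[OF cm] d by simp
    obtain c where c: "poly (pderiv p) c = 0"
      "cmod (lead_coeff (pderiv p)) * cmod (z - c) ^ degree (pderiv p) \<le> cmod (poly (pderiv p) z)"
      using root_near[OF degp] by blast
    have cS': "c \<in> S" using c(1) by (simp add: S_def)
    have cZ: "cmod c \<le> Z0" using cS[OF c(1)] .
    define \<eta> where "\<eta> = cmod (z - c)"
    have \<eta>0': "\<eta> \<ge> 0" by (simp add: \<eta>_def)
    have "real d * \<eta> ^ (d - 1) \<le> t * H"
      using c(2) pzb cm_pderiv_lead'[OF cm] cm_pderiv_degree[OF cm] d by (simp add: \<eta>_def)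
    also have "\<dots> \<le> t * (H + 1)" using t by simp
    also have "\<dots> < T * (H + 1)" using t H0 by simp
    also have "\<dots> \<le> real d * \<eta>0 ^ (d - 1)"
    proof -
      have "T \<le> real d * \<eta>0 ^ (d - 1) / (H + 1)" by (simp add: T_def)
      then show ?thesis using H0 by (simp add: field_simps)
    qed
    finally have "\<eta> ^ (d - 1) < \<eta>0 ^ (d - 1)" using d by simp
    then have \<eta>lt: "\<eta> < \<eta>0" using \<eta>0pos by (meson less_imp_le power_less_imp_less_base)
    have \<eta>\<delta>: "4 * \<eta> \<le> \<delta>" using \<eta>lt by (simp add: \<eta>0_def)
    have \<eta>\<epsilon>: "\<kappa> * \<eta> \<le> \<epsilon>"
    proof -
      have "\<eta> \<le> \<epsilon> / (\<kappa> + 1)" using \<eta>lt by (simp add: \<eta>0_def)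
      then have "(\<kappa> + 1) * \<eta> \<le> \<epsilon>" using \<kappa>0 by (simp add: field_simps)
      then show ?thesis using \<eta>0' by (simp add: algebra_simps)
    qed
    have segb: "cmod (poly (pderiv p) w) \<le> (4/3) ^ (d - 1) * cmod (poly (pderiv p) z)"
      if w: "w \<in> closed_segment c z" for w
    proof -
      have wc: "cmod (w - c) \<le> \<eta>" and wz: "cmod (w - z) \<le> \<eta>"
        using segment_bound[OF w] by (auto simp: \<eta>_def norm_minus_commute)
      have fac: "\<forall>x\<in>set xs. 0 \<le> cmod (w - x) \<and> cmod (w - x) \<le> 4/3 * cmod (z - x)"
      proof
        fix x assume x: "x \<in> set xs"
        show "0 \<le> cmod (w - x) \<and> cmod (w - x) \<le> 4/3 * cmod (z - x)"
        proof (cases "x = c")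
          case True
          have a1: "0 \<le> cmod (z - c)" "0 \<le> cmod (w - c)" by simp_all
          have a2: "cmod (w - c) \<le> cmod (z - c)" using wc by (simp add: \<eta>_def)
          show ?thesis unfolding True using a1 a2 by (intro conjI) linarith+
        next
          case False
          have "x \<in> S" using x xs(2) S_def by simp
          then have "\<delta> \<le> cmod (x - c)" using \<delta>(2)[OF _ cS' False] by simp
          moreover have "cmod (x - c) \<le> cmod (z - x) + \<eta>"
            using norm_triangle_ineq[of "x - z" "z - c"] by (simp add: \<eta>_def norm_minus_commute)
          ultimately have zx: "3 * \<eta> \<le> cmod (z - x)" using \<eta>\<delta> by linarith
          have "cmod (w - x) \<le> cmod (w - z) + cmod (z - x)"
            using norm_triangle_ineq[of "w - z" "z - x"] by simp
          then show ?thesis using wz zx by simp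
        qed
      qed
      have "cmod (poly (pderiv p) w) = real d * (\<Prod>x\<leftarrow>xs. cmod (w - x))" by (rule pdval)
      also have "\<dots> \<le> real d * ((4/3) ^ length xs * (\<Prod>x\<leftarrow>xs. cmod (z - x)))"
        by (intro mult_left_mono prod_list_le_factor[OF fac]) simp
      also have "\<dots> = (4/3) ^ (d - 1) * cmod (poly (pderiv p) z)" by (simp add: pdval lxs)
      finally show ?thesis .
    qed
    have mvt: "cmod (poly p z - poly p c) \<le> ((4/3) ^ (d - 1) * cmod (poly (pderiv p) z)) * cmod (z - c)"
    proof (rule field_differentiable_bound[of "closed_segment c z"])
      show "convex (closed_segment c z)" by simp
      show "(poly p has_field_derivative poly (pderiv p) x) (at x within closed_segment c z)" for x
        by (rule has_field_derivative_at_within) (rule poly_DERIV)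
      show "cmod (poly (pderiv p) x) \<le> (4/3) ^ (d - 1) * cmod (poly (pderiv p) z)" if "x \<in> closed_segment c z" for x
        using segb[OF that] .
    qed auto
    have mvt2: "cmod (poly p z - poly p c) \<le> t * ((4/3) ^ (d - 1) * H * \<eta>)"
    proof -
      have "cmod (poly p z - poly p c) \<le> ((4/3) ^ (d - 1) * cmod (poly (pderiv p) z)) * cmod (z - c)" by (rule mvt)
      also have "\<dots> \<le> ((4/3) ^ (d - 1) * (t * H)) * \<eta>"
        using t H0 by (intro mult_mono mult_left_mono pzb) (simp_all add: \<eta>_def)
      also have "\<dots> = t * ((4/3) ^ (d - 1) * H * \<eta>)" by (simp add: algebra_simps)
      finally show ?thesis .
    qed
    have hl: "cmod (poly h z - poly h c) \<le> H * \<eta>" using hlip[OF zZ cZ] by (simp add: \<eta>_def)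
    define v where "v = poly p c"
    have vK: "v \<in> K" using cvK c(1) by (auto simp: critical_values_def v_def)
    have hc: "poly h c = W v" using hW[OF c(1)] by (simp add: v_def)
    have "y - (v + of_real t * W v) = (poly p z - poly p c) + of_real t * (poly h z - poly h c)"
      by (simp add: yz pt_def v_def hc algebra_simps)
    then have "cmod (y - (v + of_real t * W v)) \<le> cmod (poly p z - poly p c) + t * cmod (poly h z - poly h c)"
      using t by (metis abs_of_nonneg less_imp_le norm_mult norm_of_real norm_triangle_ineq)
    also have "\<dots> \<le> t * ((4/3) ^ (d - 1) * H * \<eta>) + t * (H * \<eta>)"
      using mvt2 hl t by (intro add_mono mult_left_mono) auto
    also have "\<dots> = t * (\<kappa> * \<eta>)" by (simp add: \<kappa>_def algebra_simps)
    also have "\<dots> \<le> \<epsilon> * t" using \<eta>\<epsilon> t by (simp add: mult.commute mult_left_mono)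
    finally show "y \<in> Y" by (rule good[OF vK t(1) t1])
  qed
  show ?thesis using Tpos main by (auto simp: pt_def)
qed



lemma cm_perturb:
  assumes cm: "centered_monic d p" and degh: "degree h < d - 1"
  shows "centered_monic d (p + smult a h)"
proof (rule cm_intro)
  have "coeff h d = 0" "coeff h (d - 1) = 0" using degh by (auto intro: coeff_eq_0)
  then show "coeff (p + smult a h) d = 1" "coeff (p + smult a h) (d - 1) = 0"
    using cm_lead[OF cm] cm_cent[OF cm] by auto
  show "coeff (p + smult a h) i = 0" if "d < i" for i
    using that degh cm_degree[OF cm] by (auto simp: coeff_eq_0)
qed

lemma Poly_mt_mono: "X \<subseteq> Y \<Longrightarrow> Poly_mt d X \<subseteq> Poly_mt d Y"
  by (auto simp: Poly_mt_def)

lemma seq_to_0: "T > 0 \<Longrightarrow> (\<lambda>n. T * inverse (real (Suc (Suc n)))) \<longlonglongrightarrow> 0"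
proof -
  have "(\<lambda>n. inverse (real (Suc (Suc n)))) \<longlonglongrightarrow> 0"
    using LIMSEQ_Suc[OF LIMSEQ_inverse_real_of_nat] by simp
  then show ?thesis using tendsto_mult_right_zero by blast
qed

lemma perturb_closure:
  fixes p :: "complex poly" and W :: "complex \<Rightarrow> complex"
  assumes d: "d \<ge> 2" and cm: "centered_monic d p" and cvK: "critical_values p \<subseteq> K"
    and eps: "\<epsilon> > 0"
    and good: "\<And>v t y. v \<in> K \<Longrightarrow> 0 < t \<Longrightarrow> t < 1 \<Longrightarrow> cmod (y - (v + of_real t * W v)) \<le> \<epsilon> * t \<Longrightarrow> y \<in> Y"
  shows "(\<lambda>i. coeff p i) \<in> closure (Poly_mt d Y)"
proof -
  have pd0: "pderiv p \<noteq> 0"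
  proof
    assume "pderiv p = 0"
    then have "degree (pderiv p) = 0" by simp
    with cm_pderiv_degree[OF cm] d show False by simp
  qed
  obtain xs where xs: "length xs = degree (pderiv p)" "set xs = {z. poly (pderiv p) z = 0}"
    "pderiv p = smult (lead_coeff (pderiv p)) (\<Prod>x\<leftarrow>xs. [:-x, 1:])" "mset xs = proots (pderiv p)"
    by (rule poly_factor_list[OF pd0])
  define S where "S = {z. poly (pderiv p) z = 0}"
  have finS: "finite S" using poly_roots_finite[OF pd0] by (simp add: S_def)
  have cardS: "card S \<le> d - 1" using card_length[of xs] xs(1,2) cm_pderiv_degree[OF cm] by (simp add: S_def)
  obtain h where h: "degree h \<le> card S - 1" "\<forall>c\<in>S. poly h c = W (poly p c)"
    using interp[OF finS, of "\<lambda>c. W (poly p c)"] by blast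
  have degh: "degree h < d - 1" using h(1) cardS d by linarith
  have hW: "\<And>c. poly (pderiv p) c = 0 \<Longrightarrow> poly h c = W (poly p c)" using h(2) by (simp add: S_def)
  have "\<exists>T>0. \<forall>t. 0 < t \<and> t < T \<longrightarrow> critical_values (p + smult (of_real t) h) \<subseteq> Y"
    by (rule perturb_crit[OF d cm cvK eps _ degh hW]) (rule good; assumption)
  then obtain T where
    T0: "T > 0" and T1: "\<forall>t. 0 < t \<and> t < T \<longrightarrow> critical_values (p + smult (of_real t) h) \<subseteq> Y"
    by (elim exE conjE)
  have T: "T > 0" "\<And>t. 0 < t \<Longrightarrow> t < T \<Longrightarrow> critical_values (p + smult (of_real t) h) \<subseteq> Y"
    using T0 T1 by auto
  define F where "F t = (\<lambda>i. coeff p i + of_real t * coeff h i)" for t :: real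
  have Fc: "F t = (\<lambda>i. coeff (p + smult (of_real t) h) i)" for t by (simp add: F_def)
  define tn where "tn n = T * inverse (real (Suc (Suc n)))" for n
  have tn: "0 < tn n" "tn n < T" for n
  proof -
    have i: "0 < inverse (real (Suc (Suc n)))" "inverse (real (Suc (Suc n))) < 1" by (simp_all add: inverse_less_1_iff)
    show "0 < tn n" using T(1) i by (simp add: tn_def)
    show "tn n < T" using T(1) i unfolding tn_def by (metis mult.right_neutral mult_strict_left_mono)
  qed
  have mem: "F (tn n) \<in> Poly_mt d Y" for n
    unfolding Fc Poly_mt_def using cm_perturb[OF cm degh] T(2)[OF tn(1) tn(2)] by blast
  have cont: "continuous_on UNIV F" unfolding F_def
    by (intro continuous_on_coordinatewise_then_product continuous_intros)
  have "(F \<circ> tn) \<longlonglongrightarrow> F 0"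
    using continuous_on_tendsto_compose[OF cont seq_to_0[OF T(1)]] by (simp add: tn_def o_def)
  moreover have "F 0 = (\<lambda>i. coeff p i)" by (simp add: F_def)
  ultimately show ?thesis unfolding closure_sequential using mem by (metis comp_apply)
qed



lemma scale_closure:
  fixes p :: "complex poly" and m :: complex
  assumes d: "d \<ge> 2" and cm: "centered_monic d p" and cvK: "critical_values p \<subseteq> K"
    and good: "\<And>v l. v \<in> K \<Longrightarrow> 0 < l \<Longrightarrow> l < 1 \<Longrightarrow> of_real (1 - l) * m + of_real l * v \<in> Y"
  shows "(\<lambda>i. coeff p i) \<in> closure (Poly_mt d Y)"
proof -
  define P where "P s = smult (1 / of_real s ^ d) (p \<circ>\<^sub>p [:0, of_real s:])" for s :: real
  define q where "q s = [:of_real (1 - 1 / s ^ d) * m:] + P s" for s :: real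
  have cmq: "centered_monic d (q s)" if s: "s > 0" for s
  proof (rule cm_intro)
    have cmP: "centered_monic d (P s)" unfolding P_def by (rule normalize_cm[OF cm s])
    show "coeff (q s) d = 1" "coeff (q s) (d - 1) = 0"
      using cm_lead[OF cmP] cm_cent[OF cmP] d by (auto simp: q_def coeff_pCons split: nat.splits)
    show "coeff (q s) i = 0" if "d < i" for i
      using that cm_degree[OF cmP] by (auto simp: q_def coeff_pCons coeff_eq_0 split: nat.splits)
  qed
  have cvq: "critical_values (q s) \<subseteq> Y" if s: "s > 1" for s
  proof
    fix y assume "y \<in> critical_values (q s)"
    then obtain z where yz: "y = poly (q s) z" and z: "poly (pderiv (q s)) z = 0"
      by (auto simp: critical_values_def)
    have s0: "s > 0" using s by simp
    have "pderiv (q s) = pderiv (P s)" by (simp add: q_def pderiv_add)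
    then have "poly (pderiv p) (of_real s * z) = 0" using z normalize_crit[OF s0, of d p z] by (simp add: P_def)
    then have vK: "poly p (of_real s * z) \<in> K" using cvK by (auto simp: critical_values_def)
    define l where "l = 1 / s ^ d"
    have l: "0 < l" "l < 1" using s d by (auto simp: l_def)
    have "poly (P s) z = poly p (of_real s * z) / of_real s ^ d" unfolding P_def by (rule normalize_poly)
    then have "y = of_real (1 - l) * m + poly p (of_real s * z) / of_real s ^ d"
      by (simp add: yz q_def l_def)
    also have "poly p (of_real s * z) / of_real s ^ d = of_real l * poly p (of_real s * z)"
      by (simp add: l_def divide_inverse mult.commute)
    finally have "y = of_real (1 - l) * m + of_real l * poly p (of_real s * z)" .
    then show "y \<in> Y" using good[OF vK l] by simp
  qed
  define G where "G s = (\<lambda>i. of_real (1 - 1 / s ^ d) * (if i = 0 then m else 0) + of_real (s ^ i / s ^ d) * coeff p i)" for s :: real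
  have Gc: "G s = (\<lambda>i. coeff (q s) i)" if "s > 0" for s
  proof
    fix i
    have "coeff (q s) i = (if i = 0 then of_real (1 - 1 / s ^ d) * m else 0) + (1 / of_real s ^ d) * (of_real s ^ i * coeff p i)"
      by (cases i) (simp_all add: q_def P_def coeff_pcompose_linear poly_0_coeff_0)
    then show "G s i = coeff (q s) i" by (simp add: G_def)
  qed
  define sn where "sn n = 1 + inverse (real (Suc (Suc n)))" for n
  have sn1: "sn n > 1" for n by (simp add: sn_def)
  have mem: "G (sn n) \<in> Poly_mt d Y" for n
    using Gc[of "sn n"] sn1[of n] cmq[of "sn n"] cvq[OF sn1] unfolding Poly_mt_def by auto
  have cont: "continuous_on {0<..} G" unfolding G_def
    by (intro continuous_on_coordinatewise_then_product continuous_intros) auto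
  have snl: "sn \<longlonglongrightarrow> 1" unfolding sn_def
    using tendsto_add[OF tendsto_const[of 1] seq_to_0[of 1]] by simp
  have "(G \<circ> sn) \<longlonglongrightarrow> G 1"
    using continuous_on_tendsto_compose[OF cont snl] sn1 by (simp add: o_def less_trans[OF zero_less_one])
  moreover have "G 1 = (\<lambda>i. coeff p i)" by (simp add: G_def)
  ultimately show ?thesis unfolding closure_sequential using mem by (metis comp_apply)
qed



lemma seg_good:
  fixes a b v :: complex
  assumes ab: "a \<noteq> b" and v: "v \<in> closed_segment a b" and l: "0 < l" "l < 1"
  shows "of_real (1 - l) * ((a + b) / 2) + of_real l * v \<in> open_segment a b"
proof -
  obtain \<mu> where \<mu>: "0 \<le> \<mu>" "\<mu> \<le> 1" "v = (1 - \<mu>) *\<^sub>R a + \<mu> *\<^sub>R b" using v by (auto simp: in_segment)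
  define \<nu> where "\<nu> = (1 - l) / 2 + l * \<mu>"
  have \<nu>: "0 < \<nu>" "\<nu> < 1"
  proof -
    have h1: "l * \<mu> \<ge> 0" using l \<mu> by simp
    have h2: "l * \<mu> \<le> l" using l \<mu> mult_left_le[of \<mu> l] by simp
    have h3: "(1 - l) / 2 > 0" and h4: "(1 - l) / 2 + l < 1" using l by (simp_all add: field_simps)
    show "0 < \<nu>" using h1 h3 unfolding \<nu>_def by linarith
    show "\<nu> < 1" using h2 h4 unfolding \<nu>_def by linarith
  qed
  have "of_real (1 - l) * ((a + b) / 2) + of_real l * v = (1 - \<nu>) *\<^sub>R a + \<nu> *\<^sub>R b"
    by (simp add: \<mu>(3) \<nu>_def scaleR_conv_of_real field_simps)
  then show ?thesis using ab \<nu> by (auto simp: in_segment)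
qed

lemma rect_facts:
  assumes "closed_rectangle Qc"
  shows "compact Qc"
    and "\<exists>W \<epsilon>. \<epsilon> > 0 \<and> (\<forall>v t y. v \<in> Qc \<longrightarrow> 0 < t \<longrightarrow> t < 1 \<longrightarrow>
            cmod (y - (v + of_real t * W v)) \<le> \<epsilon> * t \<longrightarrow> y \<in> interior Qc)"
proof -
  obtain w u a b where u: "norm u = 1" and ab: "a > 0" "b > 0" and Q:
    "Qc = {w + u * (complex_of_real x + \<i> * complex_of_real y) | x y. 0 \<le> x \<and> x \<le> a \<and> 0 \<le> y \<and> y \<le> b}"
    using assms unfolding closed_rectangle_def by blast
  have u0: "u \<noteq> 0" using u by auto
  have "Qc = (\<lambda>z. w + u * (complex_of_real (fst z) + \<i> * complex_of_real (snd z))) ` ({0..a} \<times> {0..b})"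
  proof (intro equalityI subsetI)
    fix z assume "z \<in> Qc"
    then obtain x y where "z = w + u * (complex_of_real x + \<i> * complex_of_real y)" "0 \<le> x" "x \<le> a" "0 \<le> y" "y \<le> b"
      unfolding Q by blast
    then show "z \<in> (\<lambda>z. w + u * (complex_of_real (fst z) + \<i> * complex_of_real (snd z))) ` ({0..a} \<times> {0..b})"
      by (intro image_eqI[of _ _ "(x, y)"]) auto
  next
    fix z assume "z \<in> (\<lambda>z. w + u * (complex_of_real (fst z) + \<i> * complex_of_real (snd z))) ` ({0..a} \<times> {0..b})"
    then obtain xy where xy: "xy \<in> {0..a} \<times> {0..b}" "z = w + u * (complex_of_real (fst xy) + \<i> * complex_of_real (snd xy))"
      by (rule imageE)
    have "0 \<le> fst xy" "fst xy \<le> a" "0 \<le> snd xy" "snd xy \<le> b" using xy(1) by auto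
    then show "z \<in> Qc" unfolding Q using xy(2) by blast
  qed
  moreover have "compact ((\<lambda>z. w + u * (complex_of_real (fst z) + \<i> * complex_of_real (snd z))) ` ({0..a} \<times> {0..b}))"
    by (intro compact_continuous_image compact_Times compact_Icc continuous_intros)
  ultimately show "compact Qc" by simp
  define X where "X y = Re ((y - w) / u)" for y
  define Yc where "Yc y = Im ((y - w) / u)" for y
  define Op where "Op = {y. 0 < X y} \<inter> {y. X y < a} \<inter> {y. 0 < Yc y} \<inter> {y. Yc y < b}"
  have contX: "continuous_on UNIV X" unfolding X_def by (intro continuous_intros) (use u0 in auto)
  have contY: "continuous_on UNIV Yc" unfolding Yc_def by (intro continuous_intros) (use u0 in auto)
  have "open Op" unfolding Op_def
    by (intro open_Int open_Collect_less contX contY continuous_on_const)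
  moreover have "Op \<subseteq> Qc"
  proof
    fix y assume "y \<in> Op"
    then have y: "0 < X y" "X y < a" "0 < Yc y" "Yc y < b" by (auto simp: Op_def)
    have "y = w + u * ((y - w) / u)" using u0 by simp
    also have "(y - w) / u = complex_of_real (X y) + \<i> * complex_of_real (Yc y)"
      unfolding X_def Yc_def by (rule complex_eq)
    finally show "y \<in> Qc" unfolding Q using y by fastforce
  qed
  ultimately have OI: "Op \<subseteq> interior Qc" by (rule interior_maximal[rotated])
  define cen where "cen = w + u * (complex_of_real (a/2) + \<i> * complex_of_real (b/2))"
  define \<epsilon> where "\<epsilon> = min a b / 4"
  show "\<exists>W \<epsilon>. \<epsilon> > 0 \<and> (\<forall>v t y. v \<in> Qc \<longrightarrow> 0 < t \<longrightarrow> t < 1 \<longrightarrow>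
            cmod (y - (v + of_real t * W v)) \<le> \<epsilon> * t \<longrightarrow> y \<in> interior Qc)"
  proof (intro exI[of _ "\<lambda>v. cen - v"] exI[of _ \<epsilon>] conjI allI impI)
    show "\<epsilon> > 0" using ab by (simp add: \<epsilon>_def)
    fix v t y assume v: "v \<in> Qc" and t: "0 < t" "t < 1" and y: "cmod (y - (v + of_real t * (cen - v))) \<le> \<epsilon> * t"
    obtain x0 y0 where xy: "v = w + u * (complex_of_real x0 + \<i> * complex_of_real y0)"
      "0 \<le> x0" "x0 \<le> a" "0 \<le> y0" "y0 \<le> b" using v unfolding Q by blast
    define e where "e = (y - (v + of_real t * (cen - v))) / u"
    have e: "cmod e \<le> \<epsilon> * t" using y u by (simp add: e_def norm_divide)
    have "(y - w) / u = complex_of_real x0 + \<i> * complex_of_real y0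
        + of_real t * ((complex_of_real (a/2) + \<i> * complex_of_real (b/2)) - (complex_of_real x0 + \<i> * complex_of_real y0)) + e"
      using u0 by (simp add: e_def xy(1) cen_def field_simps)
    then have XY: "X y = x0 + t * (a/2 - x0) + Re e" "Yc y = y0 + t * (b/2 - y0) + Im e"
      by (simp_all add: X_def Yc_def)
    have Re: "\<bar>Re e\<bar> \<le> \<epsilon> * t" "\<bar>Im e\<bar> \<le> \<epsilon> * t"
      using e abs_Re_le_cmod abs_Im_le_cmod order_trans by blast+
    have ea: "\<epsilon> * t \<le> t * a / 4" "\<epsilon> * t \<le> t * b / 4" using t by (auto simp: \<epsilon>_def)
    have X1: "X y = (1 - t) * x0 + (t * a) / 2 + Re e" using XY(1) by (simp add: algebra_simps)
    have Y1: "Yc y = (1 - t) * y0 + (t * b) / 2 + Im e" using XY(2) by (simp add: algebra_simps)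
    have x1: "0 \<le> (1 - t) * x0" "(1 - t) * x0 \<le> a - t * a"
    proof -
      show "0 \<le> (1 - t) * x0" using t xy by simp
      have "(1 - t) * x0 \<le> (1 - t) * a" using t xy by (intro mult_left_mono) auto
      then show "(1 - t) * x0 \<le> a - t * a" by (simp add: algebra_simps)
    qed
    have y1: "0 \<le> (1 - t) * y0" "(1 - t) * y0 \<le> b - t * b"
    proof -
      show "0 \<le> (1 - t) * y0" using t xy by simp
      have "(1 - t) * y0 \<le> (1 - t) * b" using t xy by (intro mult_left_mono) auto
      then show "(1 - t) * y0 \<le> b - t * b" by (simp add: algebra_simps)
    qed
    have ta: "t * a > 0" "t * b > 0" using t ab by simp_all
    have r1: "- (\<epsilon> * t) \<le> Re e" "Re e \<le> \<epsilon> * t" "- (\<epsilon> * t) \<le> Im e" "Im e \<le> \<epsilon> * t"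
      using Re by (auto simp: abs_le_iff)
    have e4: "\<epsilon> * t \<le> (t * a) / 4" "\<epsilon> * t \<le> (t * b) / 4" using ea by simp_all
    have "0 < X y" "X y < a" "0 < Yc y" "Yc y < b"
      using X1 Y1 x1 y1 ta r1 e4 by linarith+
    then have "y \<in> Op" by (simp add: Op_def)
    then show "y \<in> interior Qc" using OI by blast
  qed
qed



lemma ann_facts:
  assumes "closed_annulus Ac"
  shows "compact Ac"
    and "\<exists>W \<epsilon>. \<epsilon> > 0 \<and> (\<forall>v t y. v \<in> Ac \<longrightarrow> 0 < t \<longrightarrow> t < 1 \<longrightarrow>
            cmod (y - (v + of_real t * W v)) \<le> \<epsilon> * t \<longrightarrow> y \<in> interior Ac)"
proof -
  obtain z0 r R where rR: "0 < r" "r < R" and A: "Ac = cball z0 R - ball z0 r"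
    using assms unfolding closed_annulus_def by blast
  show "compact Ac" unfolding A by (intro compact_diff compact_cball open_ball)
  define Op where "Op = {y. r < cmod (y - z0)} \<inter> {y. cmod (y - z0) < R}"
  have "open Op" unfolding Op_def
    by (intro open_Int open_Collect_less continuous_intros)
  moreover have "Op \<subseteq> Ac"
    unfolding Op_def A by (auto simp: dist_norm norm_minus_commute)
  ultimately have OI: "Op \<subseteq> interior Ac" by (rule interior_maximal[rotated])
  define m where "m = (r + R) / 2"
  define \<epsilon> where "\<epsilon> = (R - r) / 4"
  define W where "W v = (v - z0) * of_real ((m - cmod (v - z0)) / cmod (v - z0))" for v
  show "\<exists>W \<epsilon>. \<epsilon> > 0 \<and> (\<forall>v t y. v \<in> Ac \<longrightarrow> 0 < t \<longrightarrow> t < 1 \<longrightarrow>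
            cmod (y - (v + of_real t * W v)) \<le> \<epsilon> * t \<longrightarrow> y \<in> interior Ac)"
  proof (intro exI[of _ W] exI[of _ \<epsilon>] conjI allI impI)
    show "\<epsilon> > 0" using rR by (simp add: \<epsilon>_def)
    fix v t y assume v: "v \<in> Ac" and t: "0 < t" "t < 1" and y: "cmod (y - (v + of_real t * W v)) \<le> \<epsilon> * t"
    define \<rho> where "\<rho> = cmod (v - z0)"
    have \<rho>: "r \<le> \<rho>" "\<rho> \<le> R" using v unfolding A \<rho>_def by (auto simp: dist_norm norm_minus_commute)
    have \<rho>0: "\<rho> > 0" using \<rho> rR by linarith
    define P where "P = v + of_real t * W v"
    define \<rho>' where "\<rho>' = (1 - t) * \<rho> + t * m"
    have \<rho>'0: "\<rho>' > 0" using t \<rho>0 rR by (simp add: \<rho>'_def m_def add_pos_nonneg)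
    have "P - z0 = (v - z0) * of_real (\<rho>' / \<rho>)"
      using \<rho>0 by (simp add: P_def W_def \<rho>'_def \<rho>_def[symmetric] field_simps)
    then have "cmod (P - z0) = cmod (v - z0) * cmod (of_real (\<rho>' / \<rho>) :: complex)" by (simp only: norm_mult)
    also have "\<dots> = \<rho> * (\<rho>' / \<rho>)" using \<rho>0 \<rho>'0 by (simp del: of_real_divide add: norm_of_real \<rho>_def[symmetric])
    also have "\<dots> = \<rho>'" using \<rho>0 by simp
    finally have nP: "cmod (P - z0) = \<rho>'" .
    have "\<bar>cmod (y - z0) - cmod (P - z0)\<bar> \<le> cmod ((y - z0) - (P - z0))" by (rule norm_triangle_ineq3)
    also have "(y - z0) - (P - z0) = y - P" by simp
    finally have d1: "\<bar>cmod (y - z0) - \<rho>'\<bar> \<le> \<epsilon> * t" using y nP by (simp add: P_def)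
    have l1: "(1 - t) * r \<le> (1 - t) * \<rho>" "(1 - t) * \<rho> \<le> (1 - t) * R"
      using t \<rho> by (auto intro: mult_left_mono)
    have q1: "(1 - t) * r = r - t * r" "(1 - t) * R = R - t * R" by (simp_all add: algebra_simps)
    have q2: "\<rho>' = (1 - t) * \<rho> + (t * r + t * R) / 2" by (simp add: \<rho>'_def m_def algebra_simps)
    have q3: "\<epsilon> * t = (t * R - t * r) / 4" by (simp add: \<epsilon>_def algebra_simps)
    have q4: "t * r < t * R" using t rR by simp
    have "r < cmod (y - z0)" "cmod (y - z0) < R"
    proof -
      have d2: "\<rho>' - \<epsilon> * t \<le> cmod (y - z0)" "cmod (y - z0) \<le> \<rho>' + \<epsilon> * t"
        using d1 unfolding abs_le_iff by linarith+
      show "r < cmod (y - z0)" using d2 l1 q1 q2 q3 q4 by argo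
      show "cmod (y - z0) < R" using d2 l1 q1 q2 q3 q4 by argo
    qed
    then have "y \<in> Op" by (simp add: Op_def)
    then show "y \<in> interior Ac" using OI by blast
  qed
qed

theorem theoremF:
  fixes d :: nat and Qc Ac :: "complex set" and a b :: complex
  assumes "d \<ge> 2"
    and "closed_rectangle Qc" and "closed_annulus Ac" and "a \<noteq> b"
  shows "is_compactification_of (Poly_mt d Qc) (Poly_mt d (interior Qc))
       \<and> is_compactification_of (Poly_mt d Ac) (Poly_mt d (interior Ac))
       \<and> is_compactification_of (Poly_mt d (closed_segment a b)) (Poly_mt d (open_segment a b))"
proof -
  have d: "d \<ge> 2" by fact
  have gen: "is_compactification_of (Poly_mt d K) (Poly_mt d Y)"
    if K: "compact K" and YK: "Y \<subseteq> K"
      and cl: "\<And>p. centered_monic d p \<Longrightarrow> critical_values p \<subseteq> K \<Longrightarrow> (\<lambda>i. coeff p i) \<in> closure (Poly_mt d Y)"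
    for K Y
    unfolding is_compactification_of_def
  proof (intro conjI)
    show "compact (Poly_mt d K)" by (rule compact_Poly_mt[OF d K])
    show "Poly_mt d Y \<subseteq> Poly_mt d K" by (rule Poly_mt_mono[OF YK])
    show "Poly_mt d K \<subseteq> closure (Poly_mt d Y)"
    proof
      fix f assume "f \<in> Poly_mt d K"
      then obtain p where p: "f = (\<lambda>i. coeff p i)" "centered_monic d p" "critical_values p \<subseteq> K"
        by (auto simp: Poly_mt_def)
      show "f \<in> closure (Poly_mt d Y)" using cl[OF p(2,3)] p(1) by simp
    qed
  qed
  have Q: "is_compactification_of (Poly_mt d Qc) (Poly_mt d (interior Qc))"
  proof (rule gen)
    show "compact Qc" by (rule rect_facts(1)[OF assms(2)])
    show "interior Qc \<subseteq> Qc" by (rule interior_subset)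
    obtain W \<epsilon> where W: "\<epsilon> > 0" "\<And>v t y. v \<in> Qc \<Longrightarrow> 0 < t \<Longrightarrow> t < 1 \<Longrightarrow>
            cmod (y - (v + of_real t * W v)) \<le> \<epsilon> * t \<Longrightarrow> y \<in> interior Qc"
      using rect_facts(2)[OF assms(2)] by blast
    show "(\<lambda>i. coeff p i) \<in> closure (Poly_mt d (interior Qc))"
      if "centered_monic d p" "critical_values p \<subseteq> Qc" for p
      by (rule perturb_closure[OF d that W(1)]) (rule W(2); assumption)
  qed
  have A: "is_compactification_of (Poly_mt d Ac) (Poly_mt d (interior Ac))"
  proof (rule gen)
    show "compact Ac" by (rule ann_facts(1)[OF assms(3)])
    show "interior Ac \<subseteq> Ac" by (rule interior_subset)
    obtain W \<epsilon> where W: "\<epsilon> > 0" "\<And>v t y. v \<in> Ac \<Longrightarrow> 0 < t \<Longrightarrow> t < 1 \<Longrightarrow>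
            cmod (y - (v + of_real t * W v)) \<le> \<epsilon> * t \<Longrightarrow> y \<in> interior Ac"
      using ann_facts(2)[OF assms(3)] by blast
    show "(\<lambda>i. coeff p i) \<in> closure (Poly_mt d (interior Ac))"
      if "centered_monic d p" "critical_values p \<subseteq> Ac" for p
      by (rule perturb_closure[OF d that W(1)]) (rule W(2); assumption)
  qed
  have S: "is_compactification_of (Poly_mt d (closed_segment a b)) (Poly_mt d (open_segment a b))"
  proof (rule gen)
    show "compact (closed_segment a b)" by (rule compact_segment)
    show "open_segment a b \<subseteq> closed_segment a b" by (rule segment_open_subset_closed)
    show "(\<lambda>i. coeff p i) \<in> closure (Poly_mt d (open_segment a b))"
      if "centered_monic d p" "critical_values p \<subseteq> closed_segment a b" for p
      by (rule scale_closure[OF d that, of "(a + b) / 2"]) (rule seg_good[OF assms(4)]; assumption)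
  qed
  show ?thesis using Q A S by blast
qed


end
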